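(* Let $k\geq 1$. Every graph $G$ with $n$ vertices and no $(k+1)$-clique satisfies $c(G)\leq\left(\frac{n}{k}+1\right)^k$.
   Context: All graphs are finite, simple and undirected. A clique of a graph $G$ is a (possibly empty) set of pairwise adjacent vertices, a $k$-clique is a clique of cardinality $k$, and $c(G)$ denotes the number of cliques of $G$ (including the empty clique). *)

theory Defs
  imports Main Complex_Main
begin

definition simple_graph :: "'a set \<Rightarrow> ('a \<Rightarrow> 'a \<Rightarrow> bool) \<Rightarrow> bool" where
  "simple_graph V E \<longleftrightarrow> finite V \<and> (\<forall>x y. E x y \<longrightarrow> E y x) \<and> (\<forall>x. \<not> E x x)
     \<and> (\<forall>x y. E x y \<longrightarrow> x \<in> V \<and> y \<in> V)"

definition is_clique :: "'a set \<Rightarrow> ('a \<Rightarrow> 'a \<Rightarrow> bool) \<Rightarrow> 'a set \<Rightarrow> bool" where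
  "is_clique V E C \<longleftrightarrow> C \<subseteq> V \<and> (\<forall>x\<in>C. \<forall>y\<in>C. x \<noteq> y \<longrightarrow> E x y)"

text \<open>Number of cliques c(G), including the empty clique.\<close>
definition num_cliques :: "'a set \<Rightarrow> ('a \<Rightarrow> 'a \<Rightarrow> bool) \<Rightarrow> nat" where
  "num_cliques V E = card {C. is_clique V E C}"

end

theory Submission
  imports Defs
begin

lemma amgm:
  fixes a y :: real and m :: nat
  assumes "a \<ge> 0" "y > 0"
  shows "a * y ^ m \<le> ((a + m * y) / (m + 1)) ^ (m + 1)"
proof -
  define s where "s = (a + m * y) / (m + 1)"
  have s0: "s \<ge> 0" using assms unfolding s_def by simp
  have "-1 \<le> (s - y) / y" using assms s0 by (simp add: field_simps)
  hence "1 + real (m+1) * ((s - y) / y) \<le> (1 + (s - y) / y) ^ (m+1)"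
    by (rule Bernoulli_inequality)
  moreover have "real (m+1) * (s - y) = a - y"
    unfolding s_def by (simp add: field_simps)
  hence "1 + real (m+1) * ((s - y) / y) = a / y"
    using assms by (simp add: field_simps)
  moreover have "1 + (s - y) / y = s / y" using assms by (simp add: field_simps)
  ultimately have "a / y \<le> (s / y) ^ (m+1)" by simp
  hence "a / y * y ^ (m+1) \<le> (s / y) ^ (m+1) * y ^ (m+1)"
    using assms by (intro mult_right_mono) auto
  moreover have "a / y * y ^ (m+1) = a * y ^ m" using assms by (simp add: field_simps)
  moreover have "(s / y) ^ (m+1) * y ^ (m+1) = s ^ (m+1)" using assms
    by (simp add: power_divide)
  ultimately show ?thesis unfolding s_def by simp
qed

lemma cliques_finite: "finite V \<Longrightarrow> finite {C. is_clique V E C}"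
  by (rule finite_subset[of _ "Pow V"]) (auto simp: is_clique_def)

lemma sub_simple:
  assumes "simple_graph V E" "S \<subseteq> V"
  shows "simple_graph S (\<lambda>x y. E x y \<and> x \<in> S \<and> y \<in> S)"
  using assms unfolding simple_graph_def by (auto intro: finite_subset)

lemma sub_clique:
  "is_clique S (\<lambda>x y. E x y \<and> x \<in> S \<and> y \<in> S) C \<longleftrightarrow> is_clique V E C \<and> C \<subseteq> S"
  if "S \<subseteq> V" using that unfolding is_clique_def by blast

lemma main:
  assumes "simple_graph V E"
    and "\<not> (\<exists>C. is_clique V E C \<and> card C = k + 1)"
  shows "real (num_cliques V E) \<le> (real (card V) / real k + 1) ^ k"
  using assms
proof (induction k arbitrary: V E)
  case 0
  have "V = {}"
  proof (rule ccontr)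
    assume "V \<noteq> {}"
    then obtain x where "x \<in> V" by blast
    hence "is_clique V E {x}" by (simp add: is_clique_def)
    thus False using 0(2) by fastforce
  qed
  hence "{C. is_clique V E C} = {{}}" by (auto simp: is_clique_def)
  thus ?case by (simp add: num_cliques_def)
next
  case (Suc m)
  have fin: "finite V" using Suc.prems(1) by (simp add: simple_graph_def)
  have symE: "\<And>x y. E x y \<Longrightarrow> E y x" and irr: "\<And>x. \<not> E x x"
    and inV: "\<And>x y. E x y \<Longrightarrow> x \<in> V \<and> y \<in> V"
    using Suc.prems(1) by (auto simp: simple_graph_def)
  define n where "n = card V"
  show ?case
  proof (cases "V = {}")
    case True
    hence "{C. is_clique V E C} = {{}}" by (auto simp: is_clique_def)
    thus ?thesis using True by (simp add: num_cliques_def)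
  next
    case False
    define deg where "deg x = card {y. E x y}" for x
    obtain v where v: "v \<in> V" "\<And>x. x \<in> V \<Longrightarrow> deg x \<le> deg v"
    proof -
      have "Max (deg ` V) \<in> deg ` V" using False fin by (intro Max_in) auto
      then obtain v where "v \<in> V" "deg v = Max (deg ` V)" by auto
      moreover have "\<And>x. x \<in> V \<Longrightarrow> deg x \<le> Max (deg ` V)" using fin by simp
      ultimately show ?thesis using that by metis
    qed
    define N where "N x = {y. E x y}" for x
    have NV: "N x \<subseteq> V" for x using inV by (auto simp: N_def)
    define A where "A = N v"
    define B where "B = V - A"
    define \<Delta> where "\<Delta> = deg v"
    have cardA: "card A = \<Delta>" by (simp add: A_def N_def \<Delta>_def deg_def)
    have cardB: "card B = n - \<Delta>"
      unfolding B_def n_def using cardA NV fin A_def by (metis card_Diff_subset finite_subset)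
    have finB: "finite B" using fin B_def by simp
    have \<Delta>n: "\<Delta> \<le> n" using cardA NV fin A_def n_def by (metis card_mono)
    define Y where "Y = (real \<Delta> / real m + 1) ^ m"
    \<comment> \<open>neighbourhoods are K_{m+1}-free\<close>
    have nbh: "real (num_cliques (N x) (\<lambda>a b. E a b \<and> a \<in> N x \<and> b \<in> N x)) \<le> Y"
      if "x \<in> V" for x
    proof -
      have "real (num_cliques (N x) (\<lambda>a b. E a b \<and> a \<in> N x \<and> b \<in> N x))
          \<le> (real (card (N x)) / real m + 1) ^ m"
      proof (rule Suc.IH)
        show "simple_graph (N x) (\<lambda>a b. E a b \<and> a \<in> N x \<and> b \<in> N x)"
          using sub_simple[OF Suc.prems(1) NV] .
        show "\<not> (\<exists>C. is_clique (N x) (\<lambda>a b. E a b \<and> a \<in> N x \<and> b \<in> N x) C \<and> card C = m + 1)"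
        proof
          assume "\<exists>C. is_clique (N x) (\<lambda>a b. E a b \<and> a \<in> N x \<and> b \<in> N x) C \<and> card C = m + 1"
          then obtain C where C: "is_clique V E C" "C \<subseteq> N x" "card C = m + 1"
            using sub_clique[OF NV] by blast
          have xC: "x \<notin> C" using C(2) irr by (auto simp: N_def)
          have finC: "finite C" using C(1) fin by (auto simp: is_clique_def intro: finite_subset)
          have "is_clique V E (insert x C)"
            using C(1,2) that symE by (auto simp: is_clique_def N_def)
          moreover have "card (insert x C) = Suc m + 1" using xC finC C(3) by simp
          ultimately show False using Suc.prems(2) by blast
        qed
      qed
      also have "\<dots> \<le> Y" unfolding Y_def
      proof (rule power_mono)
        have "card (N x) \<le> \<Delta>" using v(2)[OF that] by (simp add: \<Delta>_def deg_def N_def)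
        thus "real (card (N x)) / real m + 1 \<le> real \<Delta> / real m + 1"
          by (simp add: divide_right_mono)
      qed simp
      finally show ?thesis .
    qed
    have cover: "{C. is_clique V E C} \<subseteq>
        {C. is_clique A (\<lambda>a b. E a b \<and> a \<in> A \<and> b \<in> A) C} \<union>
        (\<Union>b\<in>B. insert b ` {D. is_clique (N b) (\<lambda>x y. E x y \<and> x \<in> N b \<and> y \<in> N b) D})"
    proof
      fix C assume C: "C \<in> {C. is_clique V E C}"
      show "C \<in> {C. is_clique A (\<lambda>a b. E a b \<and> a \<in> A \<and> b \<in> A) C} \<union>
        (\<Union>b\<in>B. insert b ` {D. is_clique (N b) (\<lambda>x y. E x y \<and> x \<in> N b \<and> y \<in> N b) D})"
      proof (cases "C \<subseteq> A")
        case True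
        thus ?thesis using C sub_clique[of A V E C] NV A_def by auto
      next
        case False
        then obtain b where b: "b \<in> C" "b \<notin> A" by blast
        have "C \<subseteq> V" using C by (simp add: is_clique_def)
        hence bB: "b \<in> B" using b B_def by auto
        have "C - {b} \<subseteq> N b" using C b(1) by (auto simp: is_clique_def N_def)
        hence "is_clique (N b) (\<lambda>x y. E x y \<and> x \<in> N b \<and> y \<in> N b) (C - {b})"
          using C sub_clique[of "N b" V E "C - {b}"] NV by (auto simp: is_clique_def)
        moreover have "C = insert b (C - {b})" using b by auto
        ultimately show ?thesis using bB by blast
      qed
    qed
    have "num_cliques V E \<le> card ({C. is_clique A (\<lambda>a b. E a b \<and> a \<in> A \<and> b \<in> A) C} \<union>
        (\<Union>b\<in>B. insert b ` {D. is_clique (N b) (\<lambda>x y. E x y \<and> x \<in> N b \<and> y \<in> N b) D}))"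
      unfolding num_cliques_def
    proof (rule card_mono[OF _ cover])
      have fN: "finite (N b)" for b using NV fin by (rule finite_subset)
      show "finite ({C. is_clique A (\<lambda>a b. E a b \<and> a \<in> A \<and> b \<in> A) C} \<union>
        (\<Union>b\<in>B. insert b ` {D. is_clique (N b) (\<lambda>x y. E x y \<and> x \<in> N b \<and> y \<in> N b) D}))"
        using fN finB A_def by (simp add: cliques_finite)
    qed
    also have "\<dots> \<le> card {C. is_clique A (\<lambda>a b. E a b \<and> a \<in> A \<and> b \<in> A) C} +
        card (\<Union>b\<in>B. insert b ` {D. is_clique (N b) (\<lambda>x y. E x y \<and> x \<in> N b \<and> y \<in> N b) D})"
      by (rule card_Un_le)
    also have "card (\<Union>b\<in>B. insert b ` {D. is_clique (N b) (\<lambda>x y. E x y \<and> x \<in> N b \<and> y \<in> N b) D})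
       \<le> (\<Sum>b\<in>B. card (insert b ` {D. is_clique (N b) (\<lambda>x y. E x y \<and> x \<in> N b \<and> y \<in> N b) D}))"
      by (rule card_UN_le[OF finB])
    also have "\<dots> \<le> (\<Sum>b\<in>B. num_cliques (N b) (\<lambda>x y. E x y \<and> x \<in> N b \<and> y \<in> N b))"
      unfolding num_cliques_def
      by (intro sum_mono card_image_le cliques_finite finite_subset[OF NV fin])
    finally have c1: "real (num_cliques V E) \<le> real (num_cliques A (\<lambda>a b. E a b \<and> a \<in> A \<and> b \<in> A))
       + (\<Sum>b\<in>B. real (num_cliques (N b) (\<lambda>x y. E x y \<and> x \<in> N b \<and> y \<in> N b)))"
      unfolding num_cliques_def by (simp flip: of_nat_sum of_nat_add)
    have "(\<Sum>b\<in>B. real (num_cliques (N b) (\<lambda>x y. E x y \<and> x \<in> N b \<and> y \<in> N b))) \<le> (\<Sum>b\<in>B. Y)"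
      by (rule sum_mono) (use nbh B_def in auto)
    moreover have "real (num_cliques A (\<lambda>a b. E a b \<and> a \<in> A \<and> b \<in> A)) \<le> Y"
      using nbh[OF v(1)] A_def by simp
    ultimately have c2: "real (num_cliques V E) \<le> (real (n - \<Delta>) + 1) * Y"
      using c1 cardB by (simp add: algebra_simps)
    have Ypos: "real \<Delta> / real m + 1 > 0"
      by (metis add_pos_nonneg divide_nonneg_nonneg of_nat_0_le_iff zero_less_one add.commute)
    have "(real (n - \<Delta>) + 1) * Y \<le> (((real (n - \<Delta>) + 1) + m * (real \<Delta> / real m + 1)) / (m + 1)) ^ (m + 1)"
      unfolding Y_def by (rule amgm) (use Ypos in auto)
    also have "\<dots> \<le> (real n / real (Suc m) + 1) ^ Suc m"
    proof -
      have "(real (n - \<Delta>) + 1) + m * (real \<Delta> / real m + 1) \<le> real n + 1 + m"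
        using \<Delta>n by (cases "m = 0") (auto simp: field_simps of_nat_diff)
      hence "((real (n - \<Delta>) + 1) + m * (real \<Delta> / real m + 1)) / (m + 1) \<le> real n / real (Suc m) + 1"
      proof -
        have "real n / real (Suc m) + 1 = (real n + 1 + m) / (m + 1)" by (simp add: field_simps)
        thus ?thesis using \<open>_ \<le> real n + 1 + m\<close> by (simp add: divide_right_mono)
      qed
      moreover have "0 \<le> ((real (n - \<Delta>) + 1) + m * (real \<Delta> / real m + 1)) / (m + 1)" by simp
      ultimately show ?thesis by (metis Suc_eq_plus1 power_mono)
    qed
    finally show ?thesis using c2 n_def by simp
  qed
qed

theorem proposition9:
  fixes V :: "'a set" and E :: "'a \<Rightarrow> 'a \<Rightarrow> bool" and k :: nat
  assumes "k \<ge> 1"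
    and "simple_graph V E"
    and "\<not> (\<exists>C. is_clique V E C \<and> card C = k + 1)"
  shows "real (num_cliques V E) \<le> (real (card V) / real k + 1) ^ k"
  using main assms(2,3) .

end
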